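(* Consider the interleaved updating scheme in which, for every round $k$, agent $i$ and micro-step $j\in\{0,\dots,K_i-1\}$, the update is $\pi^i_{k,j+1}\in\arg\max_{\hat\pi^i}F_{k,i,j}(\hat\pi^i)$ (maximum over all policies of agent $i$, assumed attained). Then every micro-step satisfies $F_{k,i,j}(\pi^i_{k,j+1})\ge 0$, and for every round $k$, $J(\pi_{k+1})\ge J(\pi_k)$.
   Context: Cooperative Markov game $\langle \mathcal N,\mathcal S,\mathcal A,r,P,d\rangle$ with agents $\mathcal N=[n]=\{1,\dots,n\}$, finite state space $\mathcal S$, finite per-agent action spaces $\mathcal A^i$, joint action space $\mathcal A=\prod_i\mathcal A^i$, bounded joint reward $r:\mathcal S\times\mathcal A\to\mathbb R$, transition kernel $P(\cdot\mid s,a)$, initial distribution $d$, discount $\gamma\in[0,1)$. A policy of agent $i$ is a map $\pi^i(\cdot\mid s)\in\Delta(\mathcal A^i)$; a joint policy $\pi=(\pi^i)_i$ acts by $\pi(a\mid s)=\prod_i\pi^i(a^i\mid s)$; write $a=(a^{-i},a^i)$, $\pi^{-i}=(\pi^r)_{r\ne i}$. Return: $J(\pi)=\mathbb E_\pi[\sum_{t\ge0}\gamma^t r(s_t,a_t)]$ with $s_0\sim d$, $a_t\sim\pi(\cdot\mid s_t)$, $s_{t+1}\sim P(\cdot\mid s_t,a_t)$. Value $V_\pi(s)$ and action value $Q_\pi(s,a)$ are the expected discounted returns conditioned on $s_0=s$ (resp. $s_0=s,a_0=a$); joint advantage $A_\pi(s,a)=Q_\pi(s,a)-V_\pi(s)$.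 Single-agent advantage: $Q^i_\pi(s,a^i)=\mathbb E_{a^{-i}\sim\pi^{-i}(\cdot\mid s)}[Q_\pi(s,(a^{-i},a^i))]$, $A^i_\pi(s,a^i)=Q^i_\pi(s,a^i)-V_\pi(s)$. Discounted state visitation: $\rho_\pi(s)=\sum_{t\ge0}\gamma^t\Pr_\pi(s_t=s)$. Interleaved scheme: rounds $k=0,1,2,\dots$; $\pi_k=(\pi^i_k)_i$ is the joint policy at the start of round $k$ ($\pi_0$ arbitrary). Within round $k$ agents are processed in order $i=1,\dots,n$; agent $i$ performs $K_i\ge1$ micro-steps $j=0,\dots,K_i-1$ producing iterates $\pi^i_{k,0}=\pi^i_k,\pi^i_{k,1},\dots,\pi^i_{k,K_i}$, and then $\pi^i_{k+1}:=\pi^i_{k,K_i}$. Complement policy: $\tau^{-i}_k:=(\{\pi^r_{k+1}\}_{r<i},\{\pi^r_k\}_{r>i})$; baseline joint policy $\Pi_{k,i,j}:=(\tau^{-i}_k,\pi^i_{k,j})$. Surrogate: for a policy $\hat\pi^i$ of agent $i$, $L^i_{\Pi_{k,i,j}}(\tau^{-i}_k,\hat\pi^i):=\sum_{s}\rho_{\Pi_{k,i,j}}(s)\sum_{a^i}\hat\pi^i(a^i\mid s)\,A^i_{\Pi_{k,i,j}}(s,a^i)$. Constants: $\varepsilon_{k,i,j}=\max_{s,a}|A_{\Pi_{k,i,j}}(s,a)|$, $C_{k,i,j}=\frac{4\gamma\varepsilon_{k,i,j}}{(1-\gamma)^2}$. Max conditional KL: $D^{\max}_{\mathrm{KL}}(\mu,\nu)=\sup_s\mathrm{KL}(\mu(\cdot\mid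 s)\,\|\,\nu(\cdot\mid s))$. Micro-step objective: $F_{k,i,j}(\hat\pi^i):=L^i_{\Pi_{k,i,j}}(\tau^{-i}_k,\hat\pi^i)-C_{k,i,j}\,D^{\max}_{\mathrm{KL}}(\pi^i_{k,j},\hat\pi^i)$. *)

theory Defs
  imports "HOL-Analysis.Analysis"
begin

text \<open>Agents are 1..n; agent i has action set A i
(a subset of a common action type 'a).
P s a s' is the transition probability, r s a the joint reward, d the
initial distribution, g the discount factor.\<close>

definition is_policy :: "'a set \<Rightarrow> ('s \<Rightarrow> 'a \<Rightarrow> real) \<Rightarrow> bool" where
  "is_policy Ai p \<longleftrightarrow>
     (\<forall>s. (\<forall>x\<in>Ai. 0 \<le> p s x) \<and> (\<forall>x. x \<notin> Ai \<longrightarrow> p s x = 0) \<and> (\<Sum>x\<in>Ai. p s x) = 1)"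

definition joint_actions :: "nat \<Rightarrow> (nat \<Rightarrow> 'a set) \<Rightarrow> (nat \<Rightarrow> 'a) set" where
  "joint_actions n A = PiE {1..n} A"

definition joint_prob :: "nat \<Rightarrow> (nat \<Rightarrow> 's \<Rightarrow> 'a \<Rightarrow> real) \<Rightarrow> 's \<Rightarrow> (nat \<Rightarrow> 'a) \<Rightarrow> real" where
  "joint_prob n pol s a = (\<Prod>i\<in>{1..n}. pol i s (a i))"

fun state_dist :: "nat \<Rightarrow> (nat \<Rightarrow> 'a set) \<Rightarrow> ('s::finite \<Rightarrow> (nat \<Rightarrow> 'a) \<Rightarrow> 's \<Rightarrow> real)
    \<Rightarrow> (nat \<Rightarrow> 's \<Rightarrow> 'a \<Rightarrow> real) \<Rightarrow> ('s \<Rightarrow> real) \<Rightarrow> nat \<Rightarrow> 's \<Rightarrow> real" where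
  "state_dist n A P pol d0 0 = d0"
| "state_dist n A P pol d0 (Suc t) =
     (\<lambda>s'. \<Sum>s\<in>UNIV. state_dist n A P pol d0 t s *
              (\<Sum>a\<in>joint_actions n A. joint_prob n pol s a * P s a s'))"

definition ret :: "nat \<Rightarrow> (nat \<Rightarrow> 'a set) \<Rightarrow> ('s::finite \<Rightarrow> (nat \<Rightarrow> 'a) \<Rightarrow> 's \<Rightarrow> real)
    \<Rightarrow> ('s \<Rightarrow> (nat \<Rightarrow> 'a) \<Rightarrow> real) \<Rightarrow> real \<Rightarrow> ('s \<Rightarrow> real)
    \<Rightarrow> (nat \<Rightarrow> 's \<Rightarrow> 'a \<Rightarrow> real) \<Rightarrow> real" where
  "ret n A P r g d0 pol =
     (\<Sum>t. g ^ t * (\<Sum>s\<in>UNIV. state_dist n A P pol d0 t s *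
                      (\<Sum>a\<in>joint_actions n A. joint_prob n pol s a * r s a)))"

definition Jret where
  "Jret n A P r g d pol = ret n A P r g d pol"

definition Vf where
  "Vf n A P r g pol s = ret n A P r g (\<lambda>s'. if s' = s then 1 else 0) pol"

definition Qf where
  "Qf n A P r g pol s a = r s a + g * (\<Sum>s'\<in>UNIV. P s a s' * Vf n A P r g pol s')"

definition Af where
  "Af n A P r g pol s a = Qf n A P r g pol s a - Vf n A P r g pol s"

definition Qi where
  "Qi n A P r g pol i s x =
     (\<Sum>b\<in>PiE ({1..n} - {i}) A. (\<Prod>j\<in>{1..n} - {i}. pol j s (b j)) *
         Qf n A P r g pol s (b(i := x)))"

definition Ai_adv where
  "Ai_adv n A P r g pol i s x = Qi n A P r g pol i s x - Vf n A P r g pol s"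

definition rho where
  "rho n A P g d pol s = (\<Sum>t. g ^ t * state_dist n A P pol d t s)"

definition surrogate where
  "surrogate n A P r g d Pol i pih =
     (\<Sum>s\<in>UNIV. rho n A P g d Pol s * (\<Sum>x\<in>A i. pih s x * Ai_adv n A P r g Pol i s x))"

definition eps_adv where
  "eps_adv n A P r g Pol =
     Max ((\<lambda>(s, a). \<bar>Af n A P r g Pol s a\<bar>) ` (UNIV \<times> joint_actions n A))"

definition Cconst where
  "Cconst n A P r g Pol = 4 * g * eps_adv n A P r g Pol / (1 - g) ^ 2"

definition kl_term :: "real \<Rightarrow> real \<Rightarrow> ereal" where
  "kl_term p q = (if p = 0 then 0 else if q = 0 then \<infinity> else ereal (p * ln (p / q)))"

definition KL :: "'a set \<Rightarrow> ('s \<Rightarrow> 'a \<Rightarrow> real) \<Rightarrow> ('s \<Rightarrow> 'a \<Rightarrow> real) \<Rightarrow> 's \<Rightarrow> ereal" where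
  "KL Ai mu nu s = (\<Sum>x\<in>Ai. kl_term (mu s x) (nu s x))"

definition DmaxKL :: "'a set \<Rightarrow> ('s \<Rightarrow> 'a \<Rightarrow> real) \<Rightarrow> ('s \<Rightarrow> 'a \<Rightarrow> real) \<Rightarrow> ereal" where
  "DmaxKL Ai mu nu = (SUP s. KL Ai mu nu s)"

text \<open>Baseline joint policy Pi_{k,i,j} = (tau^{-i}_k, pi^i_{k,j}):
  agents r < i use pol (Suc k) r, agent i uses it k i j, agents r > i use pol k r.\<close>
definition baseline where
  "baseline pol it k i j = (\<lambda>r. if r < i then pol (Suc k) r else if r = i then it k i j else pol k r)"

text \<open>Micro-step objective F_{k,i,j}(pih) (extended real, since the KL may be infinite).\<close>
definition Fobj where
  "Fobj n A P r g d pol it k i j pih =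
     (let Pol = baseline pol it k i j in
       ereal (surrogate n A P r g d Pol i pih)
       - ereal (Cconst n A P r g Pol) * DmaxKL (A i) (it k i j) pih)"

end

theory Submission
  imports Defs
begin



locale mg =
  fixes n :: nat and A :: "nat \<Rightarrow> 'a set"
    and P :: "'s::finite \<Rightarrow> (nat \<Rightarrow> 'a) \<Rightarrow> 's \<Rightarrow> real"
    and r :: "'s \<Rightarrow> (nat \<Rightarrow> 'a) \<Rightarrow> real" and g :: real
  assumes A_fin: "\<forall>i\<in>{1..n}. finite (A i) \<and> A i \<noteq> {}"
    and P_stoch: "\<forall>s. \<forall>a\<in>joint_actions n A. (\<forall>s'. 0 \<le> P s a s') \<and> (\<Sum>s'\<in>UNIV. P s a s') = 1"
    and g_ge: "0 \<le> g" and g_lt: "g < 1"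
begin

definition "AS = joint_actions n A"
definition "Mk pol s s' = (\<Sum>a\<in>AS. joint_prob n pol s a * P s a s')"
definition "Rw pol s = (\<Sum>a\<in>AS. joint_prob n pol s a * r s a)"
definition "jdist pol \<longleftrightarrow> (\<forall>s. (\<forall>a\<in>AS. 0 \<le> joint_prob n pol s a) \<and> (\<Sum>a\<in>AS. joint_prob n pol s a) = 1)"
definition "Br = (\<Sum>s\<in>UNIV. \<Sum>a\<in>AS. \<bar>r s a\<bar>)"

abbreviation "sd pol \<equiv> state_dist n A P pol"

lemma finite_AS: "finite AS"
  unfolding AS_def joint_actions_def using A_fin by (auto intro!: finite_PiE)

lemma P_nonneg: "a \<in> AS \<Longrightarrow> 0 \<le> P s a s'" using P_stoch by (auto simp: AS_def)
lemma P_sum: "a \<in> AS \<Longrightarrow> (\<Sum>s'\<in>UNIV. P s a s') = 1" using P_stoch by (auto simp: AS_def)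

lemma jp_nonneg: "jdist pol \<Longrightarrow> a \<in> AS \<Longrightarrow> 0 \<le> joint_prob n pol s a" by (auto simp: jdist_def)
lemma jp_sum: "jdist pol \<Longrightarrow> (\<Sum>a\<in>AS. joint_prob n pol s a) = 1" by (auto simp: jdist_def)
lemma jp_le1: "jdist pol \<Longrightarrow> a \<in> AS \<Longrightarrow> joint_prob n pol s a \<le> 1"
proof -
  assume j: "jdist pol" and a: "a \<in> AS"
  have "joint_prob n pol s a \<le> (\<Sum>a\<in>AS. joint_prob n pol s a)"
    by (rule member_le_sum) (use j a finite_AS in \<open>auto simp: jdist_def\<close>)
  then show ?thesis using jp_sum[OF j] by simp
qed

lemma sd_Suc: "sd pol d0 (Suc t) s' = (\<Sum>s\<in>UNIV. sd pol d0 t s * Mk pol s s')"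
  by (simp add: Mk_def AS_def)

lemma Mk_nonneg: "jdist pol \<Longrightarrow> 0 \<le> Mk pol s s'"
  unfolding Mk_def by (intro sum_nonneg mult_nonneg_nonneg jp_nonneg P_nonneg) auto

lemma Mk_sum: "jdist pol \<Longrightarrow> (\<Sum>s'\<in>UNIV. Mk pol s s') = 1"
proof -
  assume j: "jdist pol"
  have "(\<Sum>s'\<in>UNIV. Mk pol s s') = (\<Sum>a\<in>AS. joint_prob n pol s a * (\<Sum>s'\<in>UNIV. P s a s'))"
    unfolding Mk_def sum_distrib_left by (rule sum.swap)
  also have "\<dots> = (\<Sum>a\<in>AS. joint_prob n pol s a)" by (simp add: P_sum)
  finally show ?thesis using jp_sum[OF j] by simp
qed

definition "isdist (d0::'s\<Rightarrow>real) \<longleftrightarrow> (\<forall>s. 0 \<le> d0 s) \<and> sum d0 UNIV = 1"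

lemma isdist_delta: "isdist (\<lambda>x. if x = s0 then 1 else 0)"
  by (simp add: isdist_def)

lemma isdist_le1: "isdist d0 \<Longrightarrow> d0 s \<le> 1"
  unfolding isdist_def by (metis finite_class.finite_UNIV iso_tuple_UNIV_I member_le_sum)

lemma sd_dist: "jdist pol \<Longrightarrow> isdist d0 \<Longrightarrow> isdist (sd pol d0 t)"
proof (induction t)
  case 0 then show ?case by simp
next
  case (Suc t)
  then have ih: "isdist (sd pol d0 t)" by simp
  have "\<forall>s'. 0 \<le> sd pol d0 (Suc t) s'"
    unfolding sd_Suc using ih Suc.prems
    by (auto intro!: sum_nonneg mult_nonneg_nonneg Mk_nonneg simp: isdist_def)
  moreover have "(\<Sum>s'\<in>UNIV. sd pol d0 (Suc t) s') = 1"
  proof -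
    have "(\<Sum>s'\<in>UNIV. sd pol d0 (Suc t) s') = (\<Sum>s\<in>UNIV. sd pol d0 t s * (\<Sum>s'\<in>UNIV. Mk pol s s'))"
      unfolding sd_Suc sum_distrib_left by (rule sum.swap)
    also have "\<dots> = 1" using Mk_sum[OF Suc.prems(1)] ih by (simp add: isdist_def)
    finally show ?thesis .
  qed
  ultimately show ?case by (simp add: isdist_def)
qed

lemma sd_lin: "sd pol d0 t s' = (\<Sum>s0\<in>UNIV. d0 s0 * sd pol (\<lambda>x. if x = s0 then 1 else 0) t s')"
proof (induction t arbitrary: s')
  case 0 then show ?case by (simp add: if_distrib cong: if_cong)
next
  case (Suc t)
  have "sd pol d0 (Suc t) s' = (\<Sum>s\<in>UNIV. (\<Sum>s0\<in>UNIV. d0 s0 * sd pol (\<lambda>x. if x = s0 then 1 else 0) t s) * Mk pol s s')"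
    unfolding sd_Suc using Suc by simp
  also have "\<dots> = (\<Sum>s0\<in>UNIV. d0 s0 * sd pol (\<lambda>x. if x = s0 then 1 else 0) (Suc t) s')"
    unfolding sd_Suc sum_distrib_left sum_distrib_right mult.assoc by (rule sum.swap)
  finally show ?case .
qed

lemma sd_shift: "sd pol d0 (Suc t) = sd pol (\<lambda>s'. \<Sum>s\<in>UNIV. d0 s * Mk pol s s') t"
proof (induction t)
  case 0 then show ?case by (simp add: Mk_def AS_def)
next
  case (Suc t)
  show ?case by (rule ext) (simp only: sd_Suc[of pol d0 "Suc t"] Suc sd_Suc[of pol _ t])
qed

lemma dist_bound: "isdist D \<Longrightarrow> (\<And>s. \<bar>f s\<bar> \<le> B) \<Longrightarrow> \<bar>\<Sum>s\<in>UNIV. D s * f s\<bar> \<le> B"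
proof -
  assume D: "isdist D" and f: "\<And>s. \<bar>f s\<bar> \<le> B"
  have "\<bar>\<Sum>s\<in>UNIV. D s * f s\<bar> \<le> (\<Sum>s\<in>UNIV. \<bar>D s * f s\<bar>)" by (rule sum_abs)
  also have "\<dots> \<le> (\<Sum>s\<in>UNIV. D s * B)"
    using D f by (intro sum_mono) (auto simp: isdist_def abs_mult intro: mult_left_mono)
  also have "\<dots> = B" using D by (simp add: isdist_def sum_distrib_right[symmetric])
  finally show ?thesis .
qed

lemma Rw_bound: "jdist pol \<Longrightarrow> \<bar>Rw pol s\<bar> \<le> Br"
proof -
  assume j: "jdist pol"
  have "\<bar>Rw pol s\<bar> \<le> (\<Sum>a\<in>AS. \<bar>joint_prob n pol s a * r s a\<bar>)" unfolding Rw_def by (rule sum_abs)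
  also have "\<dots> \<le> (\<Sum>a\<in>AS. \<bar>r s a\<bar>)"
  proof (intro sum_mono)
    fix a assume a: "a \<in> AS"
    show "\<bar>joint_prob n pol s a * r s a\<bar> \<le> \<bar>r s a\<bar>"
      using jp_nonneg[OF j a] jp_le1[OF j a] by (simp add: abs_mult mult_left_le_one_le)
  qed
  also have "\<dots> \<le> Br" unfolding Br_def
    by (rule member_le_sum[where f = "\<lambda>s. \<Sum>a\<in>AS. \<bar>r s a\<bar>"]) (auto intro: sum_nonneg)
  finally show ?thesis .
qed

lemma geom_summable: "(\<And>t. \<bar>X t\<bar> \<le> B) \<Longrightarrow> summable (\<lambda>t. g^t * X t)"
proof -
  assume X: "\<And>t. \<bar>X t\<bar> \<le> B"
  have "summable (\<lambda>t. B * g^t)" using g_ge g_lt by (intro summable_mult summable_geometric) auto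
  moreover have "norm (g^t * X t) \<le> B * g^t" for t
    using X[of t] g_ge by (simp add: abs_mult mult.commute[of _ "g^t"] mult_left_mono)
  ultimately show ?thesis by (rule summable_comparison_test') 
qed

lemma ret_eq: "ret n A P r g d0 pol = (\<Sum>t. g^t * (\<Sum>s\<in>UNIV. sd pol d0 t s * Rw pol s))"
  by (simp add: ret_def Rw_def AS_def)

lemma ret_summable: "jdist pol \<Longrightarrow> isdist d0 \<Longrightarrow> summable (\<lambda>t. g^t * (\<Sum>s\<in>UNIV. sd pol d0 t s * Rw pol s))"
  by (rule geom_summable, rule dist_bound, rule sd_dist, assumption+, rule Rw_bound)

abbreviation "V pol \<equiv> Vf n A P r g pol"

lemma ret_lin: "jdist pol \<Longrightarrow> ret n A P r g d0 pol = (\<Sum>s0\<in>UNIV. d0 s0 * V pol s0)"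
proof -
  assume j: "jdist pol"
  let ?f = "\<lambda>s0 t. d0 s0 * (g^t * (\<Sum>s\<in>UNIV. sd pol (\<lambda>x. if x = s0 then 1 else 0) t s * Rw pol s))"
  have eq: "g^t * (\<Sum>s\<in>UNIV. sd pol d0 t s * Rw pol s) = (\<Sum>s0\<in>UNIV. ?f s0 t)" for t
    apply (subst sd_lin)
    unfolding sum_distrib_left sum_distrib_right
    apply (subst sum.swap)
    by (simp add: mult_ac)
  have "ret n A P r g d0 pol = (\<Sum>t. \<Sum>s0\<in>UNIV. ?f s0 t)" unfolding ret_eq eq ..
  also have "\<dots> = (\<Sum>s0\<in>UNIV. \<Sum>t. ?f s0 t)"
    by (rule suminf_sum) (intro summable_mult ret_summable[OF j isdist_delta])
  also have "\<dots> = (\<Sum>s0\<in>UNIV. d0 s0 * V pol s0)"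
  proof (rule sum.cong[OF refl])
    fix s0 :: 's
    show "(\<Sum>t. ?f s0 t) = d0 s0 * V pol s0"
      unfolding Vf_def ret_eq by (rule suminf_mult, rule ret_summable[OF j isdist_delta])
  qed
  finally show ?thesis .
qed

end



lemma sum_delta_mult: "(\<Sum>x\<in>(UNIV::'s::finite set). (if x = s then 1 else 0) * f x) = (f s :: real)"
proof -
  have "(\<Sum>x\<in>(UNIV::'s set). (if x = s then 1 else 0) * f x) = (\<Sum>x\<in>UNIV. if x = s then f x else 0)"
    by (rule sum.cong) auto
  then show ?thesis using sum.delta[of UNIV s f] by simp
qed

context mg begin

lemma bellman:
  assumes j: "jdist pol"
  shows "V pol s = Rw pol s + g * (\<Sum>s'\<in>UNIV. Mk pol s s' * V pol s')"
proof -
  let ?d = "\<lambda>x. if x = s then 1 else (0::real)"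
  let ?X = "\<lambda>t. g^t * (\<Sum>s''\<in>UNIV. sd pol ?d t s'' * Rw pol s'')"
  have sm: "summable ?X" by (rule ret_summable[OF j isdist_delta])
  have "V pol s = suminf ?X" by (simp add: Vf_def ret_eq)
  also have "\<dots> = ?X 0 + (\<Sum>t. ?X (Suc t))" using suminf_split_head[OF sm] by simp
  also have "?X 0 = Rw pol s"
    using sum_delta_mult[of s "Rw pol"] by simp
  also have "(\<Sum>t. ?X (Suc t)) = g * ret n A P r g (Mk pol s) pol"
  proof -
    have d1: "(\<lambda>s'. \<Sum>x\<in>UNIV. ?d x * Mk pol x s') = Mk pol s" by (rule ext) (rule sum_delta_mult)
    have hx: "?X (Suc t) = g * (g^t * (\<Sum>s''\<in>UNIV. sd pol (Mk pol s) t s'' * Rw pol s''))" for t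
      by (simp only: sd_shift d1 power_Suc mult.assoc)
    have "(\<Sum>t. ?X (Suc t)) = (\<Sum>t. g * (g^t * (\<Sum>s''\<in>UNIV. sd pol (Mk pol s) t s'' * Rw pol s'')))"
      by (simp only: hx)
    also have "\<dots> = g * ret n A P r g (Mk pol s) pol"
      unfolding ret_eq
      by (rule suminf_mult, rule ret_summable[OF j])
         (use Mk_nonneg[OF j] Mk_sum[OF j] in \<open>auto simp: isdist_def\<close>)
    finally show ?thesis .
  qed
  also have "ret n A P r g (Mk pol s) pol = (\<Sum>s'\<in>UNIV. Mk pol s s' * V pol s')"
    by (rule ret_lin[OF j])
  finally show ?thesis .
qed

abbreviation "Adv pol \<equiv> Af n A P r g pol"

lemma Q_avg:
  assumes j2: "jdist pol2"
  shows "(\<Sum>a\<in>AS. joint_prob n pol2 s a * Adv pol1 s a)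
       = Rw pol2 s + g * (\<Sum>s'\<in>UNIV. Mk pol2 s s' * V pol1 s') - V pol1 s"
proof -
  have "(\<Sum>a\<in>AS. joint_prob n pol2 s a * Adv pol1 s a)
      = (\<Sum>a\<in>AS. joint_prob n pol2 s a * r s a
            + g * (\<Sum>s'\<in>UNIV. joint_prob n pol2 s a * P s a s' * V pol1 s')
            - joint_prob n pol2 s a * V pol1 s)"
    unfolding Af_def Qf_def by (intro sum.cong refl) (simp add: algebra_simps sum_distrib_left)
  also have "\<dots> = Rw pol2 s + g * (\<Sum>a\<in>AS. \<Sum>s'\<in>UNIV. joint_prob n pol2 s a * P s a s' * V pol1 s')
        - (\<Sum>a\<in>AS. joint_prob n pol2 s a) * V pol1 s"
    by (simp add: sum.distrib sum_subtractf sum_distrib_left sum_distrib_right Rw_def)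
  also have "(\<Sum>a\<in>AS. \<Sum>s'\<in>UNIV. joint_prob n pol2 s a * P s a s' * V pol1 s')
      = (\<Sum>s'\<in>UNIV. Mk pol2 s s' * V pol1 s')"
    unfolding Mk_def sum_distrib_right by (rule sum.swap)
  finally show ?thesis using jp_sum[OF j2] by simp
qed

lemma A_zero: "jdist pol \<Longrightarrow> (\<Sum>a\<in>AS. joint_prob n pol s a * Adv pol s a) = 0"
  using Q_avg[of pol s pol] bellman[of pol s] by simp

lemma sd_bound_x: "jdist pol \<Longrightarrow> isdist d0 \<Longrightarrow> \<bar>\<Sum>s\<in>UNIV. sd pol d0 t s * f s\<bar> \<le> (\<Sum>s\<in>UNIV. \<bar>f s\<bar>)"
proof -
  assume j: "jdist pol" and d: "isdist d0"
  have D: "isdist (sd pol d0 t)" by (rule sd_dist[OF j d])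
  have "\<bar>\<Sum>s\<in>UNIV. sd pol d0 t s * f s\<bar> \<le> (\<Sum>s\<in>UNIV. \<bar>sd pol d0 t s * f s\<bar>)" by (rule sum_abs)
  also have "\<dots> \<le> (\<Sum>s\<in>UNIV. \<bar>f s\<bar>)"
    using D isdist_le1[OF D]
    by (intro sum_mono) (auto simp: abs_mult isdist_def intro!: mult_left_le_one_le)
  finally show ?thesis .
qed

lemma perf_diff:
  assumes j1: "jdist pol1" and j2: "jdist pol2" and d: "isdist d0"
  shows "(\<lambda>t. g^t * (\<Sum>s\<in>UNIV. sd pol2 d0 t s * (\<Sum>a\<in>AS. joint_prob n pol2 s a * Adv pol1 s a)))
           sums (ret n A P r g d0 pol2 - ret n A P r g d0 pol1)"
proof -
  let ?x = "\<lambda>t. \<Sum>s\<in>UNIV. sd pol2 d0 t s * V pol1 s"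
  let ?Y = "\<lambda>t. g^t * (\<Sum>s\<in>UNIV. sd pol2 d0 t s * Rw pol2 s)"
  have step: "g^t * (\<Sum>s\<in>UNIV. sd pol2 d0 t s * (\<Sum>a\<in>AS. joint_prob n pol2 s a * Adv pol1 s a))
      = ?Y t + (g^(Suc t) * ?x (Suc t) - g^t * ?x t)" for t
  proof -
    have a: "(\<Sum>s\<in>UNIV. sd pol2 d0 t s * (\<Sum>a\<in>AS. joint_prob n pol2 s a * Adv pol1 s a))
       = (\<Sum>s\<in>UNIV. sd pol2 d0 t s * Rw pol2 s)
         + g * (\<Sum>s\<in>UNIV. sd pol2 d0 t s * (\<Sum>s'\<in>UNIV. Mk pol2 s s' * V pol1 s')) - ?x t"
      unfolding Q_avg[OF j2] by (simp add: algebra_simps sum.distrib sum_subtractf sum_distrib_left)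
    have b: "(\<Sum>s\<in>UNIV. sd pol2 d0 t s * (\<Sum>s'\<in>UNIV. Mk pol2 s s' * V pol1 s')) = ?x (Suc t)"
      unfolding sd_Suc sum_distrib_left sum_distrib_right mult.assoc by (rule sum.swap)
    show ?thesis unfolding a b by (simp add: algebra_simps)
  qed
  have Ysum: "?Y sums ret n A P r g d0 pol2"
    unfolding ret_eq by (rule summable_sums, rule ret_summable[OF j2 d])
  have lim: "(\<lambda>t. g^t * ?x t) \<longlonglongrightarrow> 0"
  proof (rule Lim_null_comparison)
    show "\<forall>\<^sub>F t in sequentially. norm (g^t * ?x t) \<le> g^t * (\<Sum>s\<in>UNIV. \<bar>V pol1 s\<bar>)"
      using sd_bound_x[OF j2 d] g_ge by (intro always_eventually allI) (auto simp: abs_mult intro!: mult_left_mono)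
    show "(\<lambda>t. g^t * (\<Sum>s\<in>UNIV. \<bar>V pol1 s\<bar>)) \<longlonglongrightarrow> 0"
      by (rule tendsto_mult_left_zero, rule LIMSEQ_power_zero) (use g_ge g_lt in simp)
  qed
  have tel: "(\<lambda>t. g^(Suc t) * ?x (Suc t) - g^t * ?x t) sums (0 - g^0 * ?x 0)"
    using telescope_sums[OF lim] .
  have x0: "?x 0 = ret n A P r g d0 pol1" using ret_lin[OF j1] by simp
  show ?thesis unfolding step using sums_add[OF Ysum tel] x0 by simp
qed

end



context mg begin

definition "dlt pol1 pol2 s = (\<Sum>a\<in>AS. \<bar>joint_prob n pol2 s a - joint_prob n pol1 s a\<bar>)"
abbreviation "Ab pol1 pol2 s \<equiv> (\<Sum>a\<in>AS. joint_prob n pol2 s a * Adv pol1 s a)"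
abbreviation "eps pol \<equiv> eps_adv n A P r g pol"

lemma AS_ne: "AS \<noteq> {}"
  using A_fin by (auto simp: AS_def joint_actions_def PiE_eq_empty_iff)

lemma eps_ge: "a \<in> AS \<Longrightarrow> \<bar>Adv pol s a\<bar> \<le> eps pol"
  unfolding eps_adv_def AS_def[symmetric]
  by (rule Max_ge) (auto simp: finite_AS intro!: image_eqI[where x="(s,a)"])

lemma eps_nonneg: "0 \<le> eps pol"
proof -
  obtain a where "a \<in> AS" using AS_ne by auto
  then show ?thesis using eps_ge[of a pol undefined] by linarith
qed

lemma Ab_bound:
  assumes j1: "jdist pol1" and j2: "jdist pol2"
  shows "\<bar>Ab pol1 pol2 s\<bar> \<le> dlt pol1 pol2 s * eps pol1"
proof -
  have "Ab pol1 pol2 s = Ab pol1 pol2 s - (\<Sum>a\<in>AS. joint_prob n pol1 s a * Adv pol1 s a)"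
    using A_zero[OF j1, of s] by simp
  also have "\<dots> = (\<Sum>a\<in>AS. (joint_prob n pol2 s a - joint_prob n pol1 s a) * Adv pol1 s a)"
    by (simp add: sum_subtractf left_diff_distrib)
  finally have e: "Ab pol1 pol2 s = \<dots>" .
  have "\<bar>\<Sum>a\<in>AS. (joint_prob n pol2 s a - joint_prob n pol1 s a) * Adv pol1 s a\<bar>
      \<le> (\<Sum>a\<in>AS. \<bar>(joint_prob n pol2 s a - joint_prob n pol1 s a) * Adv pol1 s a\<bar>)" by (rule sum_abs)
  also have "\<dots> \<le> (\<Sum>a\<in>AS. \<bar>joint_prob n pol2 s a - joint_prob n pol1 s a\<bar> * eps pol1)"
    by (intro sum_mono) (auto simp: abs_mult intro!: mult_left_mono eps_ge)
  also have "\<dots> = dlt pol1 pol2 s * eps pol1" by (simp add: dlt_def sum_distrib_right)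
  finally show ?thesis using e by simp
qed

lemma Mk_diff:
  assumes j1: "jdist pol1" and j2: "jdist pol2"
  shows "(\<Sum>s'\<in>UNIV. \<bar>Mk pol2 s s' - Mk pol1 s s'\<bar>) \<le> dlt pol1 pol2 s"
proof -
  have e: "Mk pol2 s s' - Mk pol1 s s' = (\<Sum>a\<in>AS. (joint_prob n pol2 s a - joint_prob n pol1 s a) * P s a s')" for s'
    by (simp add: Mk_def sum_subtractf left_diff_distrib)
  have "(\<Sum>s'\<in>UNIV. \<bar>Mk pol2 s s' - Mk pol1 s s'\<bar>)
     \<le> (\<Sum>s'\<in>UNIV. \<Sum>a\<in>AS. \<bar>joint_prob n pol2 s a - joint_prob n pol1 s a\<bar> * P s a s')"
  proof (intro sum_mono)
    fix s' :: 's
    have "\<bar>Mk pol2 s s' - Mk pol1 s s'\<bar> \<le> (\<Sum>a\<in>AS. \<bar>(joint_prob n pol2 s a - joint_prob n pol1 s a) * P s a s'\<bar>)"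
      unfolding e by (rule sum_abs)
    also have "\<dots> = (\<Sum>a\<in>AS. \<bar>joint_prob n pol2 s a - joint_prob n pol1 s a\<bar> * P s a s')"
      by (intro sum.cong refl) (simp add: abs_mult P_nonneg)
    finally show "\<bar>Mk pol2 s s' - Mk pol1 s s'\<bar> \<le> \<dots>" .
  qed
  also have "\<dots> = (\<Sum>a\<in>AS. \<Sum>s'\<in>UNIV. \<bar>joint_prob n pol2 s a - joint_prob n pol1 s a\<bar> * P s a s')"
    by (rule sum.swap)
  also have "\<dots> = dlt pol1 pol2 s"
    unfolding dlt_def by (intro sum.cong refl) (simp add: sum_distrib_left[symmetric] P_sum)
  finally show ?thesis .
qed

lemma sd_diff:
  assumes j1: "jdist pol1" and j2: "jdist pol2" and d: "isdist d0" and D: "\<And>s. dlt pol1 pol2 s \<le> D"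
  shows "(\<Sum>s\<in>UNIV. \<bar>sd pol2 d0 t s - sd pol1 d0 t s\<bar>) \<le> real t * D"
proof (induction t)
  case 0 then show ?case by simp
next
  case (Suc t)
  let ?e = "\<lambda>s. sd pol2 d0 t s - sd pol1 d0 t s"
  have e: "sd pol2 d0 (Suc t) s' - sd pol1 d0 (Suc t) s'
     = (\<Sum>s\<in>UNIV. ?e s * Mk pol2 s s') + (\<Sum>s\<in>UNIV. sd pol1 d0 t s * (Mk pol2 s s' - Mk pol1 s s'))" for s'
  proof -
    have "sd pol2 d0 (Suc t) s' - sd pol1 d0 (Suc t) s'
       = (\<Sum>s\<in>UNIV. sd pol2 d0 t s * Mk pol2 s s' - sd pol1 d0 t s * Mk pol1 s s')"
      unfolding sd_Suc by (simp add: sum_subtractf)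
    also have "\<dots> = (\<Sum>s\<in>UNIV. ?e s * Mk pol2 s s' + sd pol1 d0 t s * (Mk pol2 s s' - Mk pol1 s s'))"
      by (intro sum.cong refl) (simp add: algebra_simps)
    finally show ?thesis by (simp add: sum.distrib)
  qed
  have D1: "isdist (sd pol1 d0 t)" by (rule sd_dist[OF j1 d])
  have "(\<Sum>s'\<in>UNIV. \<bar>sd pol2 d0 (Suc t) s' - sd pol1 d0 (Suc t) s'\<bar>)
      \<le> (\<Sum>s'\<in>UNIV. (\<Sum>s\<in>UNIV. \<bar>?e s\<bar> * Mk pol2 s s') + (\<Sum>s\<in>UNIV. sd pol1 d0 t s * \<bar>Mk pol2 s s' - Mk pol1 s s'\<bar>))"
  proof (intro sum_mono)
    fix s' :: 's
    have "\<bar>\<Sum>s\<in>UNIV. ?e s * Mk pol2 s s'\<bar> \<le> (\<Sum>s\<in>UNIV. \<bar>?e s * Mk pol2 s s'\<bar>)" by (rule sum_abs)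
    also have "\<dots> = (\<Sum>s\<in>UNIV. \<bar>?e s\<bar> * Mk pol2 s s')"
      by (intro sum.cong refl) (simp add: abs_mult Mk_nonneg[OF j2])
    finally have a: "\<bar>\<Sum>s\<in>UNIV. ?e s * Mk pol2 s s'\<bar> \<le> (\<Sum>s\<in>UNIV. \<bar>?e s\<bar> * Mk pol2 s s')" .
    have "\<bar>\<Sum>s\<in>UNIV. sd pol1 d0 t s * (Mk pol2 s s' - Mk pol1 s s')\<bar>
        \<le> (\<Sum>s\<in>UNIV. \<bar>sd pol1 d0 t s * (Mk pol2 s s' - Mk pol1 s s')\<bar>)" by (rule sum_abs)
    also have "\<dots> = (\<Sum>s\<in>UNIV. sd pol1 d0 t s * \<bar>Mk pol2 s s' - Mk pol1 s s'\<bar>)"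
      using D1 by (intro sum.cong refl) (simp add: abs_mult isdist_def)
    finally have b: "\<bar>\<Sum>s\<in>UNIV. sd pol1 d0 t s * (Mk pol2 s s' - Mk pol1 s s')\<bar> \<le> \<dots>" .
    show "\<bar>sd pol2 d0 (Suc t) s' - sd pol1 d0 (Suc t) s'\<bar> \<le> (\<Sum>s\<in>UNIV. \<bar>?e s\<bar> * Mk pol2 s s') + (\<Sum>s\<in>UNIV. sd pol1 d0 t s * \<bar>Mk pol2 s s' - Mk pol1 s s'\<bar>)"
      unfolding e using a b by linarith
  qed
  also have "\<dots> = (\<Sum>s\<in>UNIV. \<bar>?e s\<bar> * (\<Sum>s'\<in>UNIV. Mk pol2 s s')) + (\<Sum>s\<in>UNIV. sd pol1 d0 t s * (\<Sum>s'\<in>UNIV. \<bar>Mk pol2 s s' - Mk pol1 s s'\<bar>))"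
  proof -
    have x1: "(\<Sum>s'\<in>UNIV. \<Sum>s\<in>UNIV. \<bar>?e s\<bar> * Mk pol2 s s') = (\<Sum>s\<in>UNIV. \<bar>?e s\<bar> * (\<Sum>s'\<in>UNIV. Mk pol2 s s'))"
      unfolding sum_distrib_left by (rule sum.swap)
    have x2: "(\<Sum>s'\<in>UNIV. \<Sum>s\<in>UNIV. sd pol1 d0 t s * \<bar>Mk pol2 s s' - Mk pol1 s s'\<bar>) = (\<Sum>s\<in>UNIV. sd pol1 d0 t s * (\<Sum>s'\<in>UNIV. \<bar>Mk pol2 s s' - Mk pol1 s s'\<bar>))"
      unfolding sum_distrib_left by (rule sum.swap)
    show ?thesis unfolding sum.distrib x1 x2 ..
  qed
  also have "\<dots> \<le> (\<Sum>s\<in>UNIV. \<bar>?e s\<bar>) + (\<Sum>s\<in>UNIV. sd pol1 d0 t s * D)"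
    using Mk_sum[OF j2] D1
    by (intro add_mono sum_mono) (auto simp: isdist_def intro!: mult_left_mono order_trans[OF Mk_diff[OF j1 j2] D])
  also have "\<dots> \<le> real t * D + D"
    using Suc.IH D1 by (simp add: sum_distrib_right[symmetric] isdist_def)
  finally show ?case by (simp add: algebra_simps)
qed

lemma tg_sums: "(\<lambda>t. real t * g^t) sums (g / (1-g)^2)"
proof -
  have "(\<lambda>t. of_nat (Suc t) * g^t) sums (1 / (1-g)^2)"
    by (rule geometric_deriv_sums) (use g_ge g_lt in simp)
  from sums_mult[OF this, of g]
  have "(\<lambda>t. real (Suc t) * g^(Suc t)) sums (g / (1-g)^2)" by (simp add: mult_ac)
  then show ?thesis using sums_Suc_iff[of "\<lambda>t. real t * g^t"] by simp
qed

lemma key_real: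
  assumes j1: "jdist pol1" and j2: "jdist pol2" and d: "isdist d0" and D: "\<And>s. dlt pol1 pol2 s \<le> D"
  shows "(\<Sum>s\<in>UNIV. rho n A P g d0 pol1 s * Ab pol1 pol2 s) - D^2 * eps pol1 * (g / (1-g)^2)
      \<le> ret n A P r g d0 pol2 - ret n A P r g d0 pol1"
proof -
  let ?L = "\<Sum>s\<in>UNIV. rho n A P g d0 pol1 s * Ab pol1 pol2 s"
  have smr: "summable (\<lambda>t. g^t * sd pol1 d0 t s)" for s
    by (rule geom_summable[where B=1])
       (use sd_dist[OF j1 d] isdist_le1[OF sd_dist[OF j1 d]] in \<open>auto simp: isdist_def\<close>)
  have "?L = (\<Sum>s\<in>UNIV. \<Sum>t. g^t * sd pol1 d0 t s * Ab pol1 pol2 s)"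
    unfolding rho_def by (intro sum.cong refl suminf_mult2 smr)
  also have "\<dots> = (\<Sum>t. \<Sum>s\<in>UNIV. g^t * sd pol1 d0 t s * Ab pol1 pol2 s)"
    by (rule suminf_sum[symmetric]) (intro summable_mult2 smr)
  finally have L: "?L = (\<Sum>t. g^t * (\<Sum>s\<in>UNIV. sd pol1 d0 t s * Ab pol1 pol2 s))"
    by (simp add: sum_distrib_left mult.assoc)
  have S1: "(\<lambda>t. g^t * (\<Sum>s\<in>UNIV. sd pol1 d0 t s * Ab pol1 pol2 s)) sums ?L"
  proof -
    have "summable (\<lambda>t. \<Sum>s\<in>UNIV. g^t * sd pol1 d0 t s * Ab pol1 pol2 s)"
      by (intro summable_sum summable_mult2 smr)
    then have "summable (\<lambda>t. g^t * (\<Sum>s\<in>UNIV. sd pol1 d0 t s * Ab pol1 pol2 s))"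
      by (simp add: sum_distrib_left mult.assoc)
    then show ?thesis unfolding L by (rule summable_sums)
  qed
  note S2 = perf_diff[OF j1 j2 d]
  have S: "(\<lambda>t. g^t * (\<Sum>s\<in>UNIV. sd pol2 d0 t s * Ab pol1 pol2 s) - g^t * (\<Sum>s\<in>UNIV. sd pol1 d0 t s * Ab pol1 pol2 s))
      sums (ret n A P r g d0 pol2 - ret n A P r g d0 pol1 - ?L)"
    by (rule sums_diff[OF S2 S1])
  let ?c = "D^2 * eps pol1"
  have Sb: "(\<lambda>t. - (real t * g^t * ?c)) sums (- (g / (1-g)^2 * ?c))"
    by (intro sums_minus sums_mult2 tg_sums)
  have le: "- (real t * g^t * ?c) \<le> g^t * (\<Sum>s\<in>UNIV. sd pol2 d0 t s * Ab pol1 pol2 s) - g^t * (\<Sum>s\<in>UNIV. sd pol1 d0 t s * Ab pol1 pol2 s)" for t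
  proof -
    have "0 \<le> dlt pol1 pol2 undefined" unfolding dlt_def by (rule sum_nonneg) simp
    then have Dn: "0 \<le> D" using D[of undefined] by linarith
    have "\<bar>\<Sum>s\<in>UNIV. (sd pol2 d0 t s - sd pol1 d0 t s) * Ab pol1 pol2 s\<bar>
        \<le> (\<Sum>s\<in>UNIV. \<bar>sd pol2 d0 t s - sd pol1 d0 t s\<bar> * \<bar>Ab pol1 pol2 s\<bar>)"
      using sum_abs[of "\<lambda>s. (sd pol2 d0 t s - sd pol1 d0 t s) * Ab pol1 pol2 s" UNIV] by (simp add: abs_mult)
    also have "\<dots> \<le> (\<Sum>s\<in>UNIV. \<bar>sd pol2 d0 t s - sd pol1 d0 t s\<bar> * (D * eps pol1))"
    proof (intro sum_mono mult_left_mono)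
      fix s :: 's
      show "\<bar>Ab pol1 pol2 s\<bar> \<le> D * eps pol1"
        using Ab_bound[OF j1 j2, of s] mult_right_mono[OF D[of s] eps_nonneg[of pol1]] by linarith
    qed simp
    also have "\<dots> = (\<Sum>s\<in>UNIV. \<bar>sd pol2 d0 t s - sd pol1 d0 t s\<bar>) * (D * eps pol1)"
      by (simp add: sum_distrib_right)
    also have "\<dots> \<le> (real t * D) * (D * eps pol1)"
      by (rule mult_right_mono[OF sd_diff[OF j1 j2 d D]]) (use Dn eps_nonneg[of pol1] in simp)
    finally have a: "\<bar>\<Sum>s\<in>UNIV. (sd pol2 d0 t s - sd pol1 d0 t s) * Ab pol1 pol2 s\<bar> \<le> real t * D * (D * eps pol1)" .
    have b: "g^t * (\<Sum>s\<in>UNIV. sd pol2 d0 t s * Ab pol1 pol2 s) - g^t * (\<Sum>s\<in>UNIV. sd pol1 d0 t s * Ab pol1 pol2 s)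
        = g^t * (\<Sum>s\<in>UNIV. (sd pol2 d0 t s - sd pol1 d0 t s) * Ab pol1 pol2 s)"
      by (simp add: right_diff_distrib[symmetric] sum_subtractf[symmetric] left_diff_distrib)
    have "- (g^t * (real t * D * (D * eps pol1))) \<le> g^t * (\<Sum>s\<in>UNIV. (sd pol2 d0 t s - sd pol1 d0 t s) * Ab pol1 pol2 s)"
      using a g_ge
      by (smt (verit, best) abs_le_D2 mult_left_mono mult_minus_right zero_le_power)
    then show ?thesis unfolding b by (simp add: power2_eq_square mult_ac)
  qed
  have "- (g / (1-g)^2 * ?c) \<le> ret n A P r g d0 pol2 - ret n A P r g d0 pol1 - ?L"
    by (rule sums_le[OF _ Sb S]) (rule le)
  then show ?thesis by (simp add: mult_ac)
qed

end



lemma kl_lower: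
  fixes p q :: real
  assumes p: "0 \<le> p" and q: "0 \<le> q" and fin: "p \<noteq> 0 \<longrightarrow> q \<noteq> 0"
  shows "2 * p - 2 * (sqrt p * sqrt q) \<le> (if p = 0 then 0 else p * ln (p / q))"
proof (cases "p = 0")
  case True then show ?thesis by simp
next
  case False
  then have pp: "0 < p" using p by simp
  have qq: "0 < q" using fin False q by simp
  define u where "u = sqrt q / sqrt p"
  have u: "0 < u" using pp qq by (simp add: u_def)
  have lnpq: "ln (p / q) = - 2 * ln u"
  proof -
    have "ln u = ln (sqrt q) - ln (sqrt p)" using pp qq by (simp add: u_def ln_divide_pos)
    also have "\<dots> = (ln q - ln p) / 2" using pp qq by (simp add: ln_sqrt diff_divide_distrib)
    finally show ?thesis using pp qq by (simp add: ln_divide_pos)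
  qed
  have "ln u \<le> u - 1" by (rule ln_le_minus_one[OF u])
  then have "p * (2 - 2 * u) \<le> p * (- 2 * ln u)" using pp by (intro mult_left_mono) auto
  moreover have "p * u = sqrt p * sqrt q"
  proof -
    have sp: "sqrt p * sqrt p = p" using pp by simp
    have s0: "sqrt p \<noteq> 0" using pp by simp
    have m: "sqrt p * sqrt q * sqrt p = p * sqrt q" by (metis sp mult.commute mult.left_commute)
    have "p * u = p * sqrt q / sqrt p" by (simp add: u_def)
    also have "\<dots> = sqrt p * sqrt q * sqrt p / sqrt p" by (simp only: m)
    also have "\<dots> = sqrt p * sqrt q" using s0 by (rule nonzero_mult_div_cancel_right)
    finally show ?thesis .
  qed
  ultimately show ?thesis using False lnpq by (simp add: algebra_simps)
qed

lemma pinsker_like: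
  fixes p q :: "'x \<Rightarrow> real"
  assumes X: "finite X" and p0: "\<forall>x\<in>X. 0 \<le> p x" and q0: "\<forall>x\<in>X. 0 \<le> q x"
    and p1: "(\<Sum>x\<in>X. p x) = 1" and q1: "(\<Sum>x\<in>X. q x) = 1"
  shows "ereal ((\<Sum>x\<in>X. \<bar>q x - p x\<bar>)^2 / 4) \<le> (\<Sum>x\<in>X. kl_term (p x) (q x))"
proof (cases "\<exists>x\<in>X. p x \<noteq> 0 \<and> q x = 0")
  case True
  then have "(\<Sum>x\<in>X. kl_term (p x) (q x)) = \<infinity>"
    using X by (subst sum_Pinfty) (auto simp: kl_term_def)
  then show ?thesis by simp
next
  case False
  then have kt: "kl_term (p x) (q x) = ereal (if p x = 0 then 0 else p x * ln (p x / q x))" if "x \<in> X" for x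
    using that by (auto simp: kl_term_def)
  have ks: "(\<Sum>x\<in>X. kl_term (p x) (q x)) = ereal (\<Sum>x\<in>X. if p x = 0 then 0 else p x * ln (p x / q x))"
    using kt by (simp add: sum_ereal[symmetric] del: sum_ereal cong: sum.cong)
  let ?H = "\<Sum>x\<in>X. (sqrt (q x) - sqrt (p x))^2"
  have H1: "?H \<le> (\<Sum>x\<in>X. if p x = 0 then 0 else p x * ln (p x / q x))"
  proof -
    have "?H = (\<Sum>x\<in>X. 2 * p x - 2 * (sqrt (p x) * sqrt (q x))) + ((\<Sum>x\<in>X. q x) - (\<Sum>x\<in>X. p x))"
      using p0 q0 by (simp add: sum_subtractf sum.distrib[symmetric] power2_eq_square algebra_simps cong: sum.cong)
    also have "\<dots> = (\<Sum>x\<in>X. 2 * p x - 2 * (sqrt (p x) * sqrt (q x)))" using p1 q1 by simp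
    also have "\<dots> \<le> (\<Sum>x\<in>X. if p x = 0 then 0 else p x * ln (p x / q x))"
      using p0 q0 False by (intro sum_mono kl_lower) auto
    finally show ?thesis .
  qed
  have H2: "(\<Sum>x\<in>X. \<bar>q x - p x\<bar>)^2 \<le> ?H * 4"
  proof -
    have e: "\<bar>q x - p x\<bar> = \<bar>sqrt (q x) - sqrt (p x)\<bar> * (sqrt (q x) + sqrt (p x))" if "x \<in> X" for x
    proof -
      have "q x - p x = (sqrt (q x) - sqrt (p x)) * (sqrt (q x) + sqrt (p x))"
        using p0 q0 that by (simp add: algebra_simps)
      moreover have "0 \<le> sqrt (q x) + sqrt (p x)" using p0 q0 that by simp
      ultimately show ?thesis by (simp add: abs_mult)
    qed
    have "(\<Sum>x\<in>X. \<bar>q x - p x\<bar>)^2 = (\<Sum>x\<in>X. \<bar>sqrt (q x) - sqrt (p x)\<bar> * (sqrt (q x) + sqrt (p x)))^2"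
      using e by (simp cong: sum.cong)
    also have "\<dots> \<le> (\<Sum>x\<in>X. \<bar>sqrt (q x) - sqrt (p x)\<bar>^2) * (\<Sum>x\<in>X. (sqrt (q x) + sqrt (p x))^2)"
      by (rule Cauchy_Schwarz_ineq_sum)
    also have "(\<Sum>x\<in>X. (sqrt (q x) + sqrt (p x))^2) \<le> 4"
    proof -
      have "(\<Sum>x\<in>X. (sqrt (q x) + sqrt (p x))^2) \<le> (\<Sum>x\<in>X. 2 * (q x + p x))"
      proof (intro sum_mono)
        fix x assume x: "x \<in> X"
        have "(sqrt (q x) + sqrt (p x))^2 + (sqrt (q x) - sqrt (p x))^2 = 2 * (q x + p x)"
          using p0 q0 x by (simp add: power2_eq_square algebra_simps)
        then show "(sqrt (q x) + sqrt (p x))^2 \<le> 2 * (q x + p x)"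
          by (smt (verit) zero_le_power2)
      qed
      also have "\<dots> = 4" using p1 q1 by (simp add: sum.distrib sum_distrib_left[symmetric])
      finally show ?thesis .
    qed
    then have "(\<Sum>x\<in>X. \<bar>sqrt (q x) - sqrt (p x)\<bar>^2) * (\<Sum>x\<in>X. (sqrt (q x) + sqrt (p x))^2) \<le> ?H * 4"
      by (simp only: power2_abs) (intro mult_left_mono, auto intro: sum_nonneg)
    finally show ?thesis .
  qed
  show ?thesis unfolding ks using H1 H2 by simp
qed




context mg begin

lemma AS_split:
  assumes i: "i \<in> {1..n}"
  shows "(\<Sum>a\<in>AS. f a) = (\<Sum>x\<in>A i. \<Sum>b\<in>PiE ({1..n}-{i}) A. f (b(i:=x)))"
proof -
  let ?I = "{1..n} - {i}"
  have "AS = PiE (insert i ?I) A" using i by (simp add: AS_def joint_actions_def insert_absorb)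
  also have "\<dots> = (\<lambda>(y,g). g(i:=y)) ` (A i \<times> PiE ?I A)" by (rule PiE_insert_eq)
  finally have e: "AS = (\<lambda>(y,g). g(i:=y)) ` (A i \<times> PiE ?I A)" .
  have inj: "inj_on (\<lambda>(y,g). g(i:=y)) (A i \<times> PiE ?I A)" by (rule inj_combinator) simp
  have "(\<Sum>a\<in>AS. f a) = (\<Sum>(y,g)\<in>A i \<times> PiE ?I A. f (g(i:=y)))"
    unfolding e by (subst sum.reindex[OF inj]) (simp add: case_prod_unfold)
  also have "\<dots> = (\<Sum>x\<in>A i. \<Sum>b\<in>PiE ?I A. f (b(i:=x)))"
    by (rule sum.cartesian_product[symmetric])
  finally show ?thesis .
qed

abbreviation "W pl i s b \<equiv> (\<Prod>j\<in>{1..n}-{i}. pl j s (b j))"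

lemma jp_split:
  assumes i: "i \<in> {1..n}"
  shows "joint_prob n pl s (b(i:=x)) = pl i s x * W pl i s b"
proof -
  have "joint_prob n pl s (b(i:=x)) = pl i s x * (\<Prod>j\<in>{1..n}-{i}. pl j s ((b(i:=x)) j))"
    unfolding joint_prob_def using i by (subst prod.remove[of "{1..n}" i]) auto
  also have "(\<Prod>j\<in>{1..n}-{i}. pl j s ((b(i:=x)) j)) = W pl i s b"
    by (intro prod.cong refl) auto
  finally show ?thesis .
qed

lemma jp_upd:
  assumes i: "i \<in> {1..n}"
  shows "joint_prob n (pl(i:=pih)) s (b(i:=x)) = pih s x * W pl i s b"
proof -
  have "joint_prob n (pl(i:=pih)) s (b(i:=x)) = pih s x * W (pl(i:=pih)) i s b"
    using jp_split[OF i, of "pl(i:=pih)"] by simp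
  also have "W (pl(i:=pih)) i s b = W pl i s b" by (intro prod.cong refl) auto
  finally show ?thesis .
qed

lemma W_sum:
  assumes pols: "\<forall>j\<in>{1..n}. is_policy (A j) (pl j)"
  shows "(\<Sum>b\<in>PiE ({1..n}-{i}) A. W pl i s b) = 1"
proof -
  have "(\<Sum>b\<in>PiE ({1..n}-{i}) A. W pl i s b) = (\<Prod>j\<in>{1..n}-{i}. \<Sum>x\<in>A j. pl j s x)"
    by (rule prod_sum_PiE[symmetric]) (use A_fin in auto)
  also have "\<dots> = 1" using pols by (intro prod.neutral) (auto simp: is_policy_def)
  finally show ?thesis .
qed

lemma W_nonneg:
  assumes pols: "\<forall>j\<in>{1..n}. is_policy (A j) (pl j)" and b: "b \<in> PiE ({1..n}-{i}) A"
  shows "0 \<le> W pl i s b"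
  using pols b by (intro prod_nonneg) (auto simp: is_policy_def PiE_mem)

lemma jdist_pols:
  assumes pols: "\<forall>j\<in>{1..n}. is_policy (A j) (pl j)"
  shows "jdist pl"
  unfolding jdist_def
proof (intro allI conjI ballI)
  fix s a assume a: "a \<in> AS"
  show "0 \<le> joint_prob n pl s a"
    unfolding joint_prob_def using pols a
    by (intro prod_nonneg) (auto simp: is_policy_def AS_def joint_actions_def PiE_mem)
next
  fix s
  have "(\<Sum>a\<in>AS. joint_prob n pl s a) = (\<Prod>j\<in>{1..n}. \<Sum>x\<in>A j. pl j s x)"
    unfolding AS_def joint_actions_def joint_prob_def
    by (rule prod_sum_PiE[symmetric]) (use A_fin in auto)
  also have "\<dots> = 1" using pols by (intro prod.neutral) (auto simp: is_policy_def)
  finally show "(\<Sum>a\<in>AS. joint_prob n pl s a) = 1" .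
qed

lemma pols_upd:
  assumes pols: "\<forall>j\<in>{1..n}. is_policy (A j) (pl j)" and ph: "is_policy (A i) pih"
  shows "\<forall>j\<in>{1..n}. is_policy (A j) ((pl(i:=pih)) j)"
  using pols ph by auto

lemma inner_eq:
  assumes pols: "\<forall>j\<in>{1..n}. is_policy (A j) (pl j)" and i: "i \<in> {1..n}"
  shows "(\<Sum>x\<in>A i. pih s x * Ai_adv n A P r g pl i s x) = Ab pl (pl(i:=pih)) s"
proof -
  have "Ab pl (pl(i:=pih)) s = (\<Sum>x\<in>A i. \<Sum>b\<in>PiE ({1..n}-{i}) A.
          joint_prob n (pl(i:=pih)) s (b(i:=x)) * Adv pl s (b(i:=x)))"
    by (rule AS_split[OF i])
  also have "\<dots> = (\<Sum>x\<in>A i. pih s x * Ai_adv n A P r g pl i s x)"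
  proof (rule sum.cong[OF refl])
    fix x
    have "(\<Sum>b\<in>PiE ({1..n}-{i}) A. joint_prob n (pl(i:=pih)) s (b(i:=x)) * Adv pl s (b(i:=x)))
        = (\<Sum>b\<in>PiE ({1..n}-{i}) A. pih s x * (W pl i s b * Qf n A P r g pl s (b(i:=x)) - W pl i s b * V pl s))"
      unfolding jp_upd[OF i] Af_def by (intro sum.cong refl) (simp add: algebra_simps)
    also have "\<dots> = pih s x * ((\<Sum>b\<in>PiE ({1..n}-{i}) A. W pl i s b * Qf n A P r g pl s (b(i:=x)))
          - (\<Sum>b\<in>PiE ({1..n}-{i}) A. W pl i s b) * V pl s)"
      by (simp add: sum_distrib_left[symmetric] sum_subtractf sum_distrib_right)
    also have "\<dots> = pih s x * Ai_adv n A P r g pl i s x"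
      unfolding W_sum[OF pols] Ai_adv_def Qi_def by simp
    finally show "(\<Sum>b\<in>PiE ({1..n}-{i}) A. joint_prob n (pl(i:=pih)) s (b(i:=x)) * Adv pl s (b(i:=x)))
        = pih s x * Ai_adv n A P r g pl i s x" .
  qed
  finally show ?thesis by simp
qed

lemma dlt_eq:
  assumes pols: "\<forall>j\<in>{1..n}. is_policy (A j) (pl j)" and i: "i \<in> {1..n}"
  shows "dlt pl (pl(i:=pih)) s = (\<Sum>x\<in>A i. \<bar>pih s x - pl i s x\<bar>)"
proof -
  have "dlt pl (pl(i:=pih)) s = (\<Sum>x\<in>A i. \<Sum>b\<in>PiE ({1..n}-{i}) A.
      \<bar>joint_prob n (pl(i:=pih)) s (b(i:=x)) - joint_prob n pl s (b(i:=x))\<bar>)"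
    unfolding dlt_def by (rule AS_split[OF i])
  also have "\<dots> = (\<Sum>x\<in>A i. \<bar>pih s x - pl i s x\<bar>)"
  proof (rule sum.cong[OF refl])
    fix x
    have "(\<Sum>b\<in>PiE ({1..n}-{i}) A. \<bar>joint_prob n (pl(i:=pih)) s (b(i:=x)) - joint_prob n pl s (b(i:=x))\<bar>)
        = (\<Sum>b\<in>PiE ({1..n}-{i}) A. \<bar>pih s x - pl i s x\<bar> * W pl i s b)"
      unfolding jp_upd[OF i] jp_split[OF i]
      using W_nonneg[OF pols]
      by (intro sum.cong refl) (simp add: left_diff_distrib[symmetric] abs_mult)
    also have "\<dots> = \<bar>pih s x - pl i s x\<bar>"
      using W_sum[OF pols, where i=i and s=s] by (simp add: sum_distrib_left[symmetric])
    finally show "(\<Sum>b\<in>PiE ({1..n}-{i}) A. \<bar>joint_prob n (pl(i:=pih)) s (b(i:=x)) - joint_prob n pl s (b(i:=x))\<bar>)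
        = \<bar>pih s x - pl i s x\<bar>" .
  qed
  finally show ?thesis .
qed

lemma agent_step:
  assumes pols: "\<forall>j\<in>{1..n}. is_policy (A j) (pl j)" and i: "i \<in> {1..n}"
    and ph: "is_policy (A i) pih" and d: "isdist d0"
  shows "ereal (surrogate n A P r g d0 pl i pih) - ereal (Cconst n A P r g pl) * DmaxKL (A i) (pl i) pih
      \<le> ereal (Jret n A P r g d0 (pl(i:=pih)) - Jret n A P r g d0 pl)"
proof -
  let ?pl2 = "pl(i:=pih)"
  have j1: "jdist pl" by (rule jdist_pols[OF pols])
  have j2: "jdist ?pl2" by (rule jdist_pols[OF pols_upd[OF pols ph]])
  define D where "D = Max (range (dlt pl ?pl2))"
  have DD: "\<And>s. dlt pl ?pl2 s \<le> D" unfolding D_def by (rule Max_ge) auto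
  have "D \<in> range (dlt pl ?pl2)" unfolding D_def by (rule Max_in) auto
  then obtain s0 where D_eq: "D = dlt pl ?pl2 s0" by auto
  note K = key_real[OF j1 j2 d DD]
  have surr: "surrogate n A P r g d0 pl i pih = (\<Sum>s\<in>UNIV. rho n A P g d0 pl s * Ab pl ?pl2 s)"
    unfolding surrogate_def inner_eq[OF pols i] ..
  have pk: "ereal (D^2/4) \<le> DmaxKL (A i) (pl i) pih"
  proof -
    have fin: "finite (A i)" using A_fin i by auto
    have "ereal (D^2/4) \<le> (\<Sum>x\<in>A i. kl_term (pl i s0 x) (pih s0 x))"
      unfolding D_eq dlt_eq[OF pols i]
      by (rule pinsker_like[OF fin]) (use pols i ph in \<open>auto simp: is_policy_def\<close>)
    also have "\<dots> = KL (A i) (pl i) pih s0" by (simp add: KL_def)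
    also have "\<dots> \<le> DmaxKL (A i) (pl i) pih" unfolding DmaxKL_def by (rule SUP_upper) simp
    finally show ?thesis .
  qed
  have Cn: "0 \<le> Cconst n A P r g pl"
    unfolding Cconst_def using g_ge eps_nonneg[of pl] by simp
  have m: "ereal (Cconst n A P r g pl) * ereal (D^2/4) \<le> ereal (Cconst n A P r g pl) * DmaxKL (A i) (pl i) pih"
    by (rule ereal_mult_left_mono[OF pk]) (simp add: Cn)
  have c: "Cconst n A P r g pl * (D^2/4) = D^2 * eps pl * (g / (1-g)^2)"
    unfolding Cconst_def by (simp add: field_simps)
  have "ereal (surrogate n A P r g d0 pl i pih) - ereal (Cconst n A P r g pl) * DmaxKL (A i) (pl i) pih
      \<le> ereal (surrogate n A P r g d0 pl i pih) - ereal (Cconst n A P r g pl) * ereal (D^2/4)"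
    by (rule ereal_minus_mono[OF order_refl m])
  also have "\<dots> = ereal (surrogate n A P r g d0 pl i pih - D^2 * eps pl * (g / (1-g)^2))"
    using c by simp
  also have "\<dots> \<le> ereal (Jret n A P r g d0 (pl(i:=pih)) - Jret n A P r g d0 pl)"
    using K unfolding surr Jret_def by simp
  finally show ?thesis .
qed

lemma surr_self:
  assumes pols: "\<forall>j\<in>{1..n}. is_policy (A j) (pl j)" and i: "i \<in> {1..n}"
  shows "surrogate n A P r g d0 pl i (pl i) = 0"
proof -
  have "Ab pl (pl(i:=pl i)) s = 0" for s using A_zero[OF jdist_pols[OF pols]] by simp
  then show ?thesis unfolding surrogate_def inner_eq[OF pols i] by simp
qed

end

lemma DmaxKL_self: "DmaxKL X p p = 0"
proof -
  have "kl_term (p s x) (p s x) = 0" for s x by (simp add: kl_term_def)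
  then show ?thesis unfolding DmaxKL_def KL_def by simp
qed




theorem theorem1:
  fixes n :: nat
    and A :: "nat \<Rightarrow> 'a set"
    and P :: "'s::finite \<Rightarrow> (nat \<Rightarrow> 'a) \<Rightarrow> 's \<Rightarrow> real"
    and r :: "'s \<Rightarrow> (nat \<Rightarrow> 'a) \<Rightarrow> real"
    and d :: "'s \<Rightarrow> real"
    and g :: real
    and K :: "nat \<Rightarrow> nat"
    and pol :: "nat \<Rightarrow> nat \<Rightarrow> 's \<Rightarrow> 'a \<Rightarrow> real"
    and it :: "nat \<Rightarrow> nat \<Rightarrow> nat \<Rightarrow> 's \<Rightarrow> 'a \<Rightarrow> real"
  assumes A_fin: "\<forall>i\<in>{1..n}. finite (A i) \<and> A i \<noteq> {}"
    and P_stoch: "\<forall>s. \<forall>a\<in>joint_actions n A. (\<forall>s'. 0 \<le> P s a s') \<and> (\<Sum>s'\<in>UNIV. P s a s') = 1"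
    and d_nonneg: "\<forall>s. 0 \<le> d s"
    and d_sum: "(\<Sum>s\<in>UNIV. d s) = 1"
    and g_ge: "0 \<le> g" and g_lt: "g < 1"
    and K_pos: "\<forall>i\<in>{1..n}. 1 \<le> K i"
    and pol0: "\<forall>i\<in>{1..n}. is_policy (A i) (pol 0 i)"
    and it_start: "\<forall>k. \<forall>i\<in>{1..n}. it k i 0 = pol k i"
    and pol_next: "\<forall>k. \<forall>i\<in>{1..n}. pol (Suc k) i = it k i (K i)"
    and argmax: "\<forall>k. \<forall>i\<in>{1..n}. \<forall>j<K i.
        is_policy (A i) (it k i (Suc j)) \<and>
        (\<forall>pih. is_policy (A i) pih \<longrightarrow>
           Fobj n A P r g d pol it k i j pih \<le> Fobj n A P r g d pol it k i j (it k i (Suc j)))"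
  shows "(\<forall>k. \<forall>i\<in>{1..n}. \<forall>j<K i. 0 \<le> Fobj n A P r g d pol it k i j (it k i (Suc j)))
       \<and> (\<forall>k. Jret n A P r g d (pol k) \<le> Jret n A P r g d (pol (Suc k)))"
proof -
  interpret mg n A P r g using A_fin P_stoch g_ge g_lt by unfold_locales auto
  have dd: "isdist d" using d_nonneg d_sum by (simp add: isdist_def)
  have polk: "is_policy (A i) (pol k i)" if i: "i \<in> {1..n}" for k i
  proof (cases k)
    case 0 then show ?thesis using pol0 i by simp
  next
    case (Suc k')
    have k1: "1 \<le> K i" using K_pos i by blast
    then have "K i = Suc (K i - 1)" "K i - 1 < K i" by arith+
    then have "is_policy (A i) (it k' i (K i))" using argmax i by metis
    then show ?thesis using pol_next i Suc by simp
  qed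
  have itp: "is_policy (A i) (it k i j)" if i: "i \<in> {1..n}" and j: "j \<le> K i" for k i j
  proof (cases j)
    case 0 then show ?thesis using it_start polk i by simp
  next
    case (Suc j')
    then show ?thesis using argmax i j by auto
  qed
  have basep: "\<forall>r\<in>{1..n}. is_policy (A r) (baseline pol it k i j r)"
    if i: "i \<in> {1..n}" and j: "j \<le> K i" for k i j
    using polk itp[OF i j] by (auto simp: baseline_def)
  have Fzero: "Fobj n A P r g d pol it k i j (it k i j) = 0"
    if i: "i \<in> {1..n}" and j: "j \<le> K i" for k i j
  proof -
    have bi: "baseline pol it k i j i = it k i j" by (simp add: baseline_def)
    have "surrogate n A P r g d (baseline pol it k i j) i (it k i j) = 0"
      using surr_self[OF basep[OF i j, of k] i, of d] bi by simp
    then show ?thesis by (simp add: Fobj_def DmaxKL_self)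
  qed
  have part1: "0 \<le> Fobj n A P r g d pol it k i j (it k i (Suc j))"
    if i: "i \<in> {1..n}" and j: "j < K i" for k i j
  proof -
    have "Fobj n A P r g d pol it k i j (it k i j) \<le> Fobj n A P r g d pol it k i j (it k i (Suc j))"
      using argmax i j itp[OF i, of j k] by auto
    then show ?thesis using Fzero[OF i, of j k] j by simp
  qed
  define Phi where "Phi k i j = Jret n A P r g d (baseline pol it k i j)" for k i j
  have Jcong: "Jret n A P r g d p1 = Jret n A P r g d p2" if h: "\<forall>r\<in>{1..n}. p1 r = p2 r" for p1 p2
  proof -
    have jp: "joint_prob n p1 = joint_prob n p2"
      using h by (auto simp: joint_prob_def intro!: ext prod.cong)
    have sd: "state_dist n A P p1 d t = state_dist n A P p2 d t" for t
      by (induction t) (simp_all add: jp)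
    show ?thesis by (simp add: Jret_def ret_def jp sd)
  qed
  have step: "Phi k i j \<le> Phi k i (Suc j)" if i: "i \<in> {1..n}" and j: "j < K i" for k i j
  proof -
    let ?pl = "baseline pol it k i j"
    have upd: "baseline pol it k i (Suc j) = ?pl(i := it k i (Suc j))"
      by (rule ext) (simp add: baseline_def)
    have bi: "?pl i = it k i j" by (simp add: baseline_def)
    have "ereal (surrogate n A P r g d ?pl i (it k i (Suc j))) - ereal (Cconst n A P r g ?pl) * DmaxKL (A i) (?pl i) (it k i (Suc j))
        \<le> ereal (Jret n A P r g d (?pl(i := it k i (Suc j))) - Jret n A P r g d ?pl)"
      by (rule agent_step[OF basep[OF i] i itp[OF i] dd]) (use j in auto)
    moreover have "ereal (surrogate n A P r g d ?pl i (it k i (Suc j))) - ereal (Cconst n A P r g ?pl) * DmaxKL (A i) (?pl i) (it k i (Suc j))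
        = Fobj n A P r g d pol it k i j (it k i (Suc j))"
      unfolding Fobj_def Let_def bi ..
    ultimately have "0 \<le> ereal (Jret n A P r g d (?pl(i := it k i (Suc j))) - Jret n A P r g d ?pl)"
      using part1[OF i j] by (metis order_trans)
    then show ?thesis unfolding Phi_def upd by simp
  qed
  have inner: "Phi k i 0 \<le> Phi k i j" if i: "i \<in> {1..n}" and j: "j \<le> K i" for k i j
    using j
  proof (induction j)
    case 0 then show ?case by simp
  next
    case (Suc j)
    then show ?case using step[OF i, of j k] by simp
  qed
  have inner': "Phi k i 0 \<le> Phi k i (K i)" if i: "i \<in> {1..n}" for k i
    using inner[OF i] by simp
  have part2: "Jret n A P r g d (pol k) \<le> Jret n A P r g d (pol (Suc k))" for k
  proof (cases "n = 0")
    case True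
    then show ?thesis using Jcong[of "pol k" "pol (Suc k)"] by simp
  next
    case False
    have first: "Phi k 1 0 = Jret n A P r g d (pol k)"
      unfolding Phi_def using it_start False by (intro Jcong) (auto simp: baseline_def)
    have link: "Phi k (Suc i) 0 = Phi k i (K i)" if "1 \<le> i" "Suc i \<le> n" for i
      unfolding Phi_def using it_start pol_next that by (intro Jcong) (auto simp: baseline_def)
    have last: "Phi k n (K n) = Jret n A P r g d (pol (Suc k))"
      unfolding Phi_def using pol_next False by (intro Jcong) (auto simp: baseline_def)
    have chain: "1 \<le> i \<longrightarrow> i \<le> n \<longrightarrow> Jret n A P r g d (pol k) \<le> Phi k i (K i)" for i
    proof (induction i)
      case 0 then show ?case by simp
    next
      case (Suc i)
      show ?case
      proof (intro impI)
        assume a: "1 \<le> Suc i" "Suc i \<le> n"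
        show "Jret n A P r g d (pol k) \<le> Phi k (Suc i) (K (Suc i))"
        proof (cases "i = 0")
          case True
          then show ?thesis using first inner'[of 1 k] a by simp
        next
          case False
          then have "Jret n A P r g d (pol k) \<le> Phi k i (K i)" using Suc a by simp
          also have "\<dots> = Phi k (Suc i) 0" using link[of i] False a by simp
          also have "\<dots> \<le> Phi k (Suc i) (K (Suc i))" using inner'[of "Suc i" k] a by simp
          finally show ?thesis .
        qed
      qed
    qed
    show ?thesis using chain[of n] last False by simp
  qed
  show ?thesis using part1 part2 by blast
qed



end
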